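(* Suppose $f$ satisfies the separation property. Then for every $n\geqslant 1$: (1) if $A,B\in\mathcal{A}_n$ and $A\cap B\neq\emptyset$, then $A=B$; (2) if $A_{i_1\dots i_n},A_{j_1\dots j_n}\in\mathcal{A}_n$ and $A_{i_1\dots i_n}=A_{j_1\dots j_n}$, then $(i_1,\dots,i_n)=(j_1,\dots,j_n)$.
   Context: Let $(X,d)$ be a compact metric space, $X_1,\dots,X_N$ ($N\geqslant 2$) non-empty pairwise disjoint open subsets with $X=\bigcup_i\overline{X_i}$, and $f:X\to X$ a map such that each restriction $f|_{X_i}$ admits a continuous extension $f_i:\overline{X_i}\to X$. Separation property: each $f_i$ is injective and $f_i(\overline{X_i})\cap f_j(\overline{X_j})=\emptyset$ for $i\neq j$. For $A\subset X$ let $F_i(A):=\overline{f(A\cap X_i)}$; for $(i_1,\dots,i_n)\in\{1,\dots,N\}^n$, $A_{i_1\dots i_n}:=F_{i_n}\circ F_{i_{n-1}}\circ\dots\circ F_{i_1}(X)$ is called an atom of generation $n$ if it is non-empty, and $\mathcal{A}_n$ denotes the set of atoms of generation $n$. *)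

theory Defs
  imports "HOL-Analysis.Analysis"
begin

definition Fmap :: "(nat \<Rightarrow> 'a::metric_space set) \<Rightarrow> ('a \<Rightarrow> 'a) \<Rightarrow> nat \<Rightarrow> 'a set \<Rightarrow> 'a set" where
  "Fmap Xs f i A = closure (f ` (A \<inter> Xs i))"

text \<open>The set A_{i_1...i_n} = F_{i_n} o ... o F_{i_1} (X) for the word [i_1,...,i_n]
  (fold applies F_{i_1} first).\<close>
definition atom_set :: "'a::metric_space set \<Rightarrow> (nat \<Rightarrow> 'a set) \<Rightarrow> ('a \<Rightarrow> 'a) \<Rightarrow> nat list \<Rightarrow> 'a set" where
  "atom_set X Xs f w = fold (Fmap Xs f) w X"

definition atoms :: "'a::metric_space set \<Rightarrow> (nat \<Rightarrow> 'a set) \<Rightarrow> ('a \<Rightarrow> 'a) \<Rightarrow> nat \<Rightarrow> nat \<Rightarrow> 'a set set" where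
  "atoms X Xs f N n = {atom_set X Xs f w | w. length w = n \<and> set w \<subseteq> {1..N} \<and> atom_set X Xs f w \<noteq> {}}"

end

theory Submission
  imports Defs
begin

lemma img_closure_eq:
  fixes K :: "'a::metric_space set" and g :: "'a \<Rightarrow> 'b::metric_space"
  assumes "compact K" "continuous_on K g" "S \<subseteq> K"
  shows "closure (g ` S) = g ` closure S"
proof
  have cK: "closed K" using assms(1) by (simp add: compact_imp_closed)
  have sub: "closure S \<subseteq> K" using assms(3) cK by (simp add: closure_minimal)
  have "compact (closure S)" using assms(1) sub
    by (metis closed_closure compact_Int_closed inf.absorb2)
  hence "compact (g ` closure S)"
    using compact_continuous_image continuous_on_subset[OF assms(2) sub] by blast
  hence "closed (g ` closure S)" by (simp add: compact_imp_closed)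
  thus "closure (g ` S) \<subseteq> g ` closure S"
    by (simp add: closure_minimal closure_subset image_mono)
  show "g ` closure S \<subseteq> closure (g ` S)"
    by (rule image_closure_subset[OF continuous_on_subset[OF assms(2) sub]])
       (auto simp: closure_subset)
qed

theorem lemma1:
  fixes X :: "'a::metric_space set" and Xs :: "nat \<Rightarrow> 'a set" and f :: "'a \<Rightarrow> 'a"
    and fi :: "nat \<Rightarrow> 'a \<Rightarrow> 'a" and N :: nat
  assumes "compact X"
    and "N \<ge> 2"
    and "\<And>i. i \<in> {1..N} \<Longrightarrow> Xs i \<noteq> {}"
    and "\<And>i. i \<in> {1..N} \<Longrightarrow> openin (top_of_set X) (Xs i)"
    and "\<And>i j. i \<in> {1..N} \<Longrightarrow> j \<in> {1..N} \<Longrightarrow> i \<noteq> j \<Longrightarrow> Xs i \<inter> Xs j = {}"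
    and "X = (\<Union>i\<in>{1..N}. closure (Xs i))"
    and "f ` X \<subseteq> X"
    and "\<And>i. i \<in> {1..N} \<Longrightarrow> continuous_on (closure (Xs i)) (fi i)"
    and "\<And>i. i \<in> {1..N} \<Longrightarrow> fi i ` closure (Xs i) \<subseteq> X"
    and "\<And>i x. i \<in> {1..N} \<Longrightarrow> x \<in> Xs i \<Longrightarrow> fi i x = f x"
    and sep_inj: "\<And>i. i \<in> {1..N} \<Longrightarrow> inj_on (fi i) (closure (Xs i))"
    and sep_disj: "\<And>i j. i \<in> {1..N} \<Longrightarrow> j \<in> {1..N} \<Longrightarrow> i \<noteq> j \<Longrightarrow>
                      fi i ` closure (Xs i) \<inter> fi j ` closure (Xs j) = {}"
    and "n \<ge> 1"
  shows "(\<forall>A\<in>atoms X Xs f N n. \<forall>B\<in>atoms X Xs f N n. A \<inter> B \<noteq> {} \<longrightarrow> A = B)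
       \<and> (\<forall>v w. length v = n \<and> set v \<subseteq> {1..N} \<and> atom_set X Xs f v \<noteq> {}
              \<and> length w = n \<and> set w \<subseteq> {1..N} \<and> atom_set X Xs f w \<noteq> {}
              \<and> atom_set X Xs f v = atom_set X Xs f w \<longrightarrow> v = w)"
proof -
  define A where "A = atom_set X Xs f"
  have XK: "\<And>i. i \<in> {1..N} \<Longrightarrow> compact (closure (Xs i))"
  proof -
    fix i assume i: "i \<in> {1..N}"
    have "closure (Xs i) \<subseteq> X" using assms(6) i by blast
    thus "compact (closure (Xs i))" using assms(1)
      by (metis closed_closure compact_Int_closed inf.absorb2)
  qed
  have Fm: "Fmap Xs f i B = fi i ` closure (B \<inter> Xs i)" if i: "i \<in> {1..N}" for i B
  proof -
    have "f ` (B \<inter> Xs i) = fi i ` (B \<inter> Xs i)" using assms(10)[OF i] by auto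
    hence "Fmap Xs f i B = closure (fi i ` (B \<inter> Xs i))" by (simp add: Fmap_def)
    also have "\<dots> = fi i ` closure (B \<inter> Xs i)"
      by (rule img_closure_eq[OF XK[OF i] assms(8)[OF i]]) (meson closure_subset inf_le2 order_trans)
    finally show ?thesis .
  qed
  have Asnoc: "A (v @ [i]) = Fmap Xs f i (A v)" for v i by (simp add: A_def atom_set_def)
  have closedA: "closed (A v)" for v
  proof (cases v rule: rev_exhaust)
    case Nil thus ?thesis using assms(1) by (simp add: A_def atom_set_def compact_imp_closed)
  next
    case (snoc u i) thus ?thesis by (simp add: Asnoc Fmap_def)
  qed
  have key: "\<forall>v w. length v = m \<and> length w = m \<and> set v \<subseteq> {1..N} \<and> set w \<subseteq> {1..N}
      \<and> A v \<inter> A w \<noteq> {} \<longrightarrow> v = w" for m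
  proof (induction m)
    case 0 thus ?case by auto
  next
    case (Suc m)
    show ?case
    proof (intro allI impI)
      fix v w assume h: "length v = Suc m \<and> length w = Suc m \<and> set v \<subseteq> {1..N} \<and> set w \<subseteq> {1..N}
        \<and> A v \<inter> A w \<noteq> {}"
      obtain v' i where v: "v = v' @ [i]" using h by (metis length_Suc_conv_rev)
      obtain w' j where w: "w = w' @ [j]" using h by (metis length_Suc_conv_rev)
      have i: "i \<in> {1..N}" and j: "j \<in> {1..N}" using h v w by auto
      obtain x where x: "x \<in> A v" "x \<in> A w" using h by blast
      have xa: "x \<in> fi i ` closure (A v' \<inter> Xs i)" using x(1) v Asnoc Fm[OF i] by simp
      have xb: "x \<in> fi j ` closure (A w' \<inter> Xs j)" using x(2) w Asnoc Fm[OF j] by simp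
      have ij: "i = j"
      proof (rule ccontr)
        assume "i \<noteq> j"
        hence "fi i ` closure (Xs i) \<inter> fi j ` closure (Xs j) = {}" using sep_disj i j by blast
        moreover have "x \<in> fi i ` closure (Xs i)" using xa closure_mono[of "A v' \<inter> Xs i" "Xs i"] by blast
        moreover have "x \<in> fi j ` closure (Xs j)" using xb closure_mono[of "A w' \<inter> Xs j" "Xs j"] by blast
        ultimately show False by blast
      qed
      obtain a where a: "a \<in> closure (A v' \<inter> Xs i)" "x = fi i a" using xa by blast
      obtain b where b: "b \<in> closure (A w' \<inter> Xs i)" "x = fi i b" using xb ij by blast
      have "a \<in> closure (Xs i)" using a(1) closure_mono[of "A v' \<inter> Xs i" "Xs i"] by blast
      moreover have "b \<in> closure (Xs i)" using b(1) closure_mono[of "A w' \<inter> Xs i" "Xs i"] by blast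
      ultimately have ab: "a = b" using sep_inj[OF i] a(2) b(2) by (metis inj_onD)
      have "a \<in> A v'" using a(1) closure_mono[of "A v' \<inter> Xs i" "A v'"] closure_closed[OF closedA] by blast
      moreover have "a \<in> A w'" using b(1) ab closure_mono[of "A w' \<inter> Xs i" "A w'"] closure_closed[OF closedA] by blast
      ultimately have "v' = w'" using Suc.IH h v w by auto
      thus "v = w" using v w ij by simp
    qed
  qed
  show ?thesis
  proof
    show "\<forall>A\<in>atoms X Xs f N n. \<forall>B\<in>atoms X Xs f N n. A \<inter> B \<noteq> {} \<longrightarrow> A = B"
      using key unfolding atoms_def A_def by blast
    show "\<forall>v w. length v = n \<and> set v \<subseteq> {1..N} \<and> atom_set X Xs f v \<noteq> {}
              \<and> length w = n \<and> set w \<subseteq> {1..N} \<and> atom_set X Xs f w \<noteq> {}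
              \<and> atom_set X Xs f v = atom_set X Xs f w \<longrightarrow> v = w"
      using key unfolding A_def by (metis inf.idem)
  qed
qed

end
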